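(* Let $\mathcal{A}$ be a probabilistic automaton with state set $Q$, and let $(u_n)_{n\in\mathbb{N}}$ and $(v_n)_{n\in\mathbb{N}}$ be sequences of words that reify limit-words $\mathbf{u}$ and $\mathbf{v}$ respectively. Then: (1) the sequence $(u_n\cdot v_n)_{n\in\mathbb{N}}$ reifies $\mathbf{u}\cdot\mathbf{v}$; (2) if $\mathbf{u}$ is idempotent, then there exists an increasing function $f:\mathbb{N}\to\mathbb{N}$ such that for every increasing function $g:\mathbb{N}\to\mathbb{N}$ with $g\ge f$ (pointwise), the sequence $(u_{g(n)}^{\,n})_{n\in\mathbb{N}}$ reifies $\mathbf{u}^\sharp$.
   Context: Fix a finite alphabet $A$. A probabilistic automaton is $\mathcal{A}=(Q,q_0,\Delta,F)$ with $Q$ finite, $q_0\in Q$, $F\subseteq Q$ and $\Delta: Q\times A\to\mathcal{D}(Q)$. For $a\in A$ let $M_a(s,t)=\Delta(s,a)(t)$, for $u=a_0\cdots a_{n-1}$ let $M_u=M_{a_0}\cdots M_{a_{n-1}}$ (identity for the empty word), and $\mathbb{P}_{\mathcal{A}}(s\xrightarrow{u}t)=M_u(s,t)$; $u^n$ denotes $u$ concatenated $n$ times. A limit-word is a map $\mathbf{u}:Q\times Q\to\{0,1\}$ such that every $s$ has some $t$ with $\mathbf{u}(s,t)=1$. Concatenation: $(\mathbf{u}\cdot\mathbf{v})(s,t)=1$ iff there is $q$ with $\mathbf{u}(s,q)=\mathbf{v}(q,t)=1$. $\mathbf{u}$ is idempotent if $\mathbf{u}\cdot\mathbf{u}=\mathbf{u}$;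 for idempotent $\mathbf{u}$, $s$ is $\mathbf{u}$-recurrent if for all $t$, $\mathbf{u}(s,t)=1\Rightarrow\mathbf{u}(t,s)=1$, and $\mathbf{u}^\sharp(s,t)=1$ iff $\mathbf{u}(s,t)=1$ and $t$ is $\mathbf{u}$-recurrent. A sequence of words $(w_n)_{n}$ reifies a limit-word $\mathbf{w}$ if for all states $s,t$ the sequence $\mathbb{P}_{\mathcal{A}}(s\xrightarrow{w_n}t)$ converges and $\mathbf{w}(s,t)=1\iff\lim_n\mathbb{P}_{\mathcal{A}}(s\xrightarrow{w_n}t)>0$. *)

theory Defs
  imports "HOL-Probability.Probability_Mass_Function"
begin

record ('s, 'a) prob_automaton =
  init :: 's
  trans :: "'s \<Rightarrow> 'a \<Rightarrow> 's pmf"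
  final :: "'s set"

text \<open>P_A(s --u--> t) = M_u(s,t), with M_u the product of the letter matrices.\<close>
fun path_prob :: "('s::finite, 'a) prob_automaton \<Rightarrow> 's \<Rightarrow> 'a list \<Rightarrow> 's \<Rightarrow> real" where
  "path_prob A s [] t = (if s = t then 1 else 0)"
| "path_prob A s (a # w) t = (\<Sum>q\<in>UNIV. pmf (trans A s a) q * path_prob A q w t)"

definition word_pow :: "'a list \<Rightarrow> nat \<Rightarrow> 'a list" where
  "word_pow u n = concat (replicate n u)"

type_synonym 's limit_word = "'s \<Rightarrow> 's \<Rightarrow> bool"

definition is_limit_word :: "'s limit_word \<Rightarrow> bool" where
  "is_limit_word u \<longleftrightarrow> (\<forall>s. \<exists>t. u s t)"

definition lw_concat :: "'s limit_word \<Rightarrow> 's limit_word \<Rightarrow> 's limit_word" where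
  "lw_concat u v = (\<lambda>s t. \<exists>q. u s q \<and> v q t)"

definition lw_idempotent :: "'s limit_word \<Rightarrow> bool" where
  "lw_idempotent u \<longleftrightarrow> lw_concat u u = u"

definition lw_recurrent :: "'s limit_word \<Rightarrow> 's \<Rightarrow> bool" where
  "lw_recurrent u s \<longleftrightarrow> (\<forall>t. u s t \<longrightarrow> u t s)"

definition lw_sharp :: "'s limit_word \<Rightarrow> 's limit_word" where
  "lw_sharp u = (\<lambda>s t. u s t \<and> lw_recurrent u t)"

definition reifies :: "('s::finite, 'a) prob_automaton \<Rightarrow> (nat \<Rightarrow> 'a list) \<Rightarrow> 's limit_word \<Rightarrow> bool" where
  "reifies A w lw \<longleftrightarrow>
     (\<forall>s t. convergent (\<lambda>n. path_prob A s (w n) t) \<and>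
            (lw s t \<longleftrightarrow> lim (\<lambda>n. path_prob A s (w n) t) > 0))"

end

theory Submission
  imports Defs
begin


fun mpow :: "('s::finite \<Rightarrow> 's \<Rightarrow> real) \<Rightarrow> nat \<Rightarrow> 's \<Rightarrow> 's \<Rightarrow> real" where
  "mpow M 0 s t = (if s = t then 1 else 0)"
| "mpow M (Suc n) s t = (\<Sum>q\<in>UNIV. M s q * mpow M n q t)"

lemma sum_delta_left: "(\<Sum>q\<in>(UNIV::'s::finite set). (if s = q then 1 else 0) * (f q::real)) = f s"
proof -
  have "(\<lambda>q. (if s = q then 1 else 0) * f q) = (\<lambda>q. if s = q then f q else 0)" by auto
  then show ?thesis by (simp only:) (simp add: sum.delta sum.delta')
qed

lemma sum_delta_right: "(\<Sum>q\<in>(UNIV::'s::finite set). (f q::real) * (if q = t then 1 else 0)) = f t"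
proof -
  have "(\<lambda>q. f q * (if q = t then 1 else 0)) = (\<lambda>q. if q = t then f q else 0)" by auto
  then show ?thesis by (simp only:) (simp add: sum.delta sum.delta')
qed

lemma path_prob_append:
  "path_prob A s (xs @ ys) t = (\<Sum>q\<in>UNIV. path_prob A s xs q * path_prob A q ys t)"
proof (induction xs arbitrary: s)
  case Nil
  then show ?case by (simp add: sum_delta_left)
next
  case (Cons a xs)
  have "path_prob A s ((a # xs) @ ys) t = (\<Sum>p\<in>UNIV. pmf (trans A s a) p * (\<Sum>q\<in>UNIV. path_prob A p xs q * path_prob A q ys t))"
    using Cons by simp
  also have "\<dots> = (\<Sum>p\<in>UNIV. \<Sum>q\<in>UNIV. pmf (trans A s a) p * path_prob A p xs q * path_prob A q ys t)"
    by (simp add: sum_distrib_left mult.assoc)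
  also have "\<dots> = (\<Sum>q\<in>UNIV. \<Sum>p\<in>UNIV. pmf (trans A s a) p * path_prob A p xs q * path_prob A q ys t)"
    by (rule sum.swap)
  also have "\<dots> = (\<Sum>q\<in>UNIV. path_prob A s (a # xs) q * path_prob A q ys t)"
    by (simp add: sum_distrib_right)
  finally show ?case .
qed

lemma path_prob_nonneg: "path_prob A s w t \<ge> 0"
  by (induction w arbitrary: s) (auto intro!: sum_nonneg)

lemma path_prob_rows: "(\<Sum>t\<in>UNIV. path_prob A s w t) = 1"
proof (induction w arbitrary: s)
  case Nil
  then show ?case by simp
next
  case (Cons a w)
  have "(\<Sum>t\<in>UNIV. path_prob A s (a # w) t) = (\<Sum>q\<in>UNIV. pmf (trans A s a) q * (\<Sum>t\<in>UNIV. path_prob A q w t))"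
    by (simp add: sum_distrib_left, rule sum.swap)
  also have "\<dots> = (\<Sum>q\<in>UNIV. pmf (trans A s a) q)" using Cons by simp
  also have "\<dots> = 1" by (rule sum_pmf_eq_1) auto
  finally show ?case .
qed

lemma word_pow_Suc: "word_pow w (Suc n) = w @ word_pow w n"
  by (simp add: word_pow_def)

lemma path_prob_word_pow:
  "path_prob A s (word_pow w n) t = mpow (\<lambda>s t. path_prob A s w t) n s t"
proof (induction n arbitrary: s)
  case 0
  then show ?case by (simp add: word_pow_def)
next
  case (Suc n)
  then show ?case by (simp add: word_pow_Suc path_prob_append)
qed

lemma mpow_add: "mpow M (m + n) s t = (\<Sum>q\<in>UNIV. mpow M m s q * mpow M n q t)"
proof (induction m arbitrary: s)
  case 0
  then show ?case by (simp add: sum_delta_left)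
next
  case (Suc m)
  have "mpow M (Suc m + n) s t = (\<Sum>p\<in>UNIV. M s p * (\<Sum>q\<in>UNIV. mpow M m p q * mpow M n q t))"
    using Suc by simp
  also have "\<dots> = (\<Sum>p\<in>UNIV. \<Sum>q\<in>UNIV. M s p * mpow M m p q * mpow M n q t)"
    by (simp add: sum_distrib_left mult.assoc)
  also have "\<dots> = (\<Sum>q\<in>UNIV. \<Sum>p\<in>UNIV. M s p * mpow M m p q * mpow M n q t)"
    by (rule sum.swap)
  also have "\<dots> = (\<Sum>q\<in>UNIV. mpow M (Suc m) s q * mpow M n q t)"
    by (simp add: sum_distrib_right)
  finally show ?case .
qed

lemma mpow_one: "mpow M 1 s t = M s t"
  by (simp add: sum_delta_right)

lemma mpow_Suc_right: "mpow M (Suc n) s t = (\<Sum>q\<in>UNIV. mpow M n s q * M q t)"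
proof -
  have "mpow M (Suc n) s t = mpow M (n + 1) s t" by simp
  also have "\<dots> = (\<Sum>q\<in>UNIV. mpow M n s q * mpow M 1 q t)" by (rule mpow_add)
  also have "\<dots> = (\<Sum>q\<in>UNIV. mpow M n s q * M q t)" by (simp only: mpow_one)
  finally show ?thesis .
qed

lemma mpow_nonneg: "(\<And>s t. M s t \<ge> 0) \<Longrightarrow> mpow M n s t \<ge> 0"
  by (induction n arbitrary: s) (auto intro!: sum_nonneg)

lemma mpow_rows:
  assumes "\<And>s. (\<Sum>t\<in>UNIV. M s t) = 1"
  shows "(\<Sum>t\<in>UNIV. mpow M n s t) = 1"
proof (induction n arbitrary: s)
  case 0
  then show ?case by simp
next
  case (Suc n)
  have "(\<Sum>t\<in>UNIV. mpow M (Suc n) s t) = (\<Sum>q\<in>UNIV. M s q * (\<Sum>t\<in>UNIV. mpow M n q t))"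
    by (simp add: sum_distrib_left, rule sum.swap)
  then show ?case using Suc assms by simp
qed

lemma mpow_le1:
  assumes "\<And>s t. M s t \<ge> 0" "\<And>s. (\<Sum>t\<in>UNIV. M s t) = 1"
  shows "mpow M n s t \<le> 1"
proof -
  have "mpow M n s t \<le> (\<Sum>t\<in>UNIV. mpow M n s t)"
    by (rule member_le_sum) (auto intro: mpow_nonneg assms)
  then show ?thesis using mpow_rows[OF assms(2)] by simp
qed

lemma mpow_diff:
  fixes P Q :: "'s::finite \<Rightarrow> 's \<Rightarrow> real"
  assumes Pn: "\<And>s t. P s t \<ge> 0" and Qn: "\<And>s t. Q s t \<ge> 0"
    and Qr: "\<And>s. (\<Sum>t\<in>UNIV. Q s t) = 1" and Pr: "\<And>s. (\<Sum>t\<in>UNIV. P s t) = 1"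
    and e: "\<And>s. (\<Sum>t\<in>UNIV. \<bar>P s t - Q s t\<bar>) \<le> e"
  shows "(\<Sum>t\<in>UNIV. \<bar>mpow P n s t - mpow Q n s t\<bar>) \<le> real n * e"
proof (induction n arbitrary: s)
  case 0
  then show ?case by simp
next
  case (Suc n)
  have eq: "mpow P (Suc n) s t - mpow Q (Suc n) s t =
     (\<Sum>q\<in>UNIV. P s q * (mpow P n q t - mpow Q n q t)) + (\<Sum>q\<in>UNIV. (P s q - Q s q) * mpow Q n q t)" for t
    by (simp add: sum.distrib[symmetric] algebra_simps sum_subtractf[symmetric])
  have "(\<Sum>t\<in>UNIV. \<bar>mpow P (Suc n) s t - mpow Q (Suc n) s t\<bar>) \<le>
     (\<Sum>t\<in>UNIV. (\<Sum>q\<in>UNIV. P s q * \<bar>mpow P n q t - mpow Q n q t\<bar>) + (\<Sum>q\<in>UNIV. \<bar>P s q - Q s q\<bar> * mpow Q n q t))"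
  proof (rule sum_mono)
    fix t
    have "\<bar>mpow P (Suc n) s t - mpow Q (Suc n) s t\<bar> \<le> \<bar>\<Sum>q\<in>UNIV. P s q * (mpow P n q t - mpow Q n q t)\<bar> + \<bar>\<Sum>q\<in>UNIV. (P s q - Q s q) * mpow Q n q t\<bar>"
      unfolding eq by (rule abs_triangle_ineq)
    also have "\<dots> \<le> (\<Sum>q\<in>UNIV. P s q * \<bar>mpow P n q t - mpow Q n q t\<bar>) + (\<Sum>q\<in>UNIV. \<bar>P s q - Q s q\<bar> * mpow Q n q t)"
    proof (rule add_mono)
      show "\<bar>\<Sum>q\<in>UNIV. P s q * (mpow P n q t - mpow Q n q t)\<bar> \<le> (\<Sum>q\<in>UNIV. P s q * \<bar>mpow P n q t - mpow Q n q t\<bar>)"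
        using sum_abs[of "\<lambda>q. P s q * (mpow P n q t - mpow Q n q t)" UNIV] by (simp add: abs_mult Pn)
      show "\<bar>\<Sum>q\<in>UNIV. (P s q - Q s q) * mpow Q n q t\<bar> \<le> (\<Sum>q\<in>UNIV. \<bar>P s q - Q s q\<bar> * mpow Q n q t)"
        using sum_abs[of "\<lambda>q. (P s q - Q s q) * mpow Q n q t" UNIV] by (simp add: abs_mult mpow_nonneg[OF Qn])
    qed
    finally show "\<bar>mpow P (Suc n) s t - mpow Q (Suc n) s t\<bar> \<le> \<dots>" .
  qed
  also have "\<dots> = (\<Sum>q\<in>UNIV. P s q * (\<Sum>t\<in>UNIV. \<bar>mpow P n q t - mpow Q n q t\<bar>)) + (\<Sum>q\<in>UNIV. \<bar>P s q - Q s q\<bar> * (\<Sum>t\<in>UNIV. mpow Q n q t))"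
  proof -
    have 1: "(\<Sum>t\<in>UNIV. \<Sum>q\<in>UNIV. P s q * \<bar>mpow P n q t - mpow Q n q t\<bar>) = (\<Sum>q\<in>UNIV. P s q * (\<Sum>t\<in>UNIV. \<bar>mpow P n q t - mpow Q n q t\<bar>))"
      by (subst sum.swap) (simp add: sum_distrib_left)
    have 2: "(\<Sum>t\<in>UNIV. \<Sum>q\<in>UNIV. \<bar>P s q - Q s q\<bar> * mpow Q n q t) = (\<Sum>q\<in>UNIV. \<bar>P s q - Q s q\<bar> * (\<Sum>t\<in>UNIV. mpow Q n q t))"
      by (subst sum.swap) (simp add: sum_distrib_left)
    show ?thesis by (simp only: sum.distrib 1 2)
  qed
  also have "\<dots> \<le> (\<Sum>q\<in>UNIV. P s q * (real n * e)) + (\<Sum>q\<in>UNIV. \<bar>P s q - Q s q\<bar>)"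
    using Suc.IH by (auto simp: mpow_rows[OF Qr] intro!: sum_mono mult_left_mono Pn)
  also have "\<dots> \<le> real n * e + e"
    using e[of s] by (simp add: sum_distrib_right[symmetric] Pr)
  finally show ?case by (simp add: algebra_simps)
qed




declare mpow.simps(2)[simp del]

lemma sum_pos_iff:
  assumes "\<And>q. (f q :: real) \<ge> 0"
  shows "(\<Sum>q\<in>(UNIV::'s::finite set). f q) > 0 \<longleftrightarrow> (\<exists>q. f q > 0)"
proof -
  have 1: "(\<Sum>q\<in>(UNIV::'s set). f q) = 0 \<longleftrightarrow> (\<forall>q. f q = 0)"
    using sum_nonneg_eq_0_iff[of "UNIV::'s set" f] assms by auto
  have 2: "(\<Sum>q\<in>(UNIV::'s set). f q) \<ge> 0" by (rule sum_nonneg) (use assms in auto)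
  show ?thesis using 1 2 assms by (metis less_eq_real_def)
qed

lemma sum_UNIV_restrict:
  assumes "\<And>q. q \<notin> C \<Longrightarrow> f q = 0"
  shows "(\<Sum>q\<in>(UNIV::'s::finite set). f q) = (\<Sum>q\<in>C. f q)"
  by (rule sum.mono_neutral_right) (use assms in auto)

lemma avg_bounds:
  fixes w x :: "'s \<Rightarrow> real"
  assumes "finite C" "q0 \<in> C" "q1 \<in> C" "\<And>q. q \<in> C \<Longrightarrow> w q \<ge> 0" "(\<Sum>q\<in>C. w q) = 1"
    "\<And>q. q \<in> C \<Longrightarrow> lo \<le> x q" "\<And>q. q \<in> C \<Longrightarrow> x q \<le> hi"
    "x q0 = lo" "x q1 = hi" "w q0 \<ge> e" "w q1 \<ge> e"
  shows "lo + e * (hi - lo) \<le> (\<Sum>q\<in>C. w q * x q) \<and> (\<Sum>q\<in>C. w q * x q) \<le> hi - e * (hi - lo)"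
proof
  have "(\<Sum>q\<in>C. w q * x q) = lo + (\<Sum>q\<in>C. w q * (x q - lo))"
    using assms(5) by (simp add: algebra_simps sum_subtractf sum_distrib_right[symmetric] sum_distrib_left[symmetric])
  moreover have "w q1 * (x q1 - lo) \<le> (\<Sum>q\<in>C. w q * (x q - lo))"
    by (rule member_le_sum) (use assms in \<open>auto intro!: mult_nonneg_nonneg\<close>)
  moreover have "e * (hi - lo) \<le> w q1 * (x q1 - lo)"
  proof -
    have "hi - lo \<ge> 0" using assms(3,6,9) by force
    then show ?thesis using assms(9,11) by (simp add: mult_right_mono)
  qed
  ultimately show "lo + e * (hi - lo) \<le> (\<Sum>q\<in>C. w q * x q)" by linarith
next
  have "(\<Sum>q\<in>C. w q * x q) = hi - (\<Sum>q\<in>C. w q * (hi - x q))"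
    using assms(5) by (simp add: algebra_simps sum_subtractf sum_distrib_right[symmetric] sum_distrib_left[symmetric])
  moreover have "w q0 * (hi - x q0) \<le> (\<Sum>q\<in>C. w q * (hi - x q))"
    by (rule member_le_sum) (use assms in \<open>auto intro!: mult_nonneg_nonneg\<close>)
  moreover have "e * (hi - lo) \<le> w q0 * (hi - x q0)"
  proof -
    have "hi - lo \<ge> 0" using assms(2,7,8) by force
    then show ?thesis using assms(8,10) by (simp add: mult_right_mono)
  qed
  ultimately show "(\<Sum>q\<in>C. w q * x q) \<le> hi - e * (hi - lo)" by linarith
qed

locale idem_chain =
  fixes M :: "'s::finite \<Rightarrow> 's \<Rightarrow> real" and u :: "'s limit_word"
  assumes nonneg: "\<And>s t. M s t \<ge> 0" and rows: "\<And>s. (\<Sum>t\<in>UNIV. M s t) = 1"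
    and supp: "\<And>s t. M s t > 0 \<longleftrightarrow> u s t" and idem: "lw_concat u u = u"
begin

lemma trans_u: "u s q \<Longrightarrow> u q t \<Longrightarrow> u s t"
  using fun_cong[OF fun_cong[OF idem, of s], of t] unfolding lw_concat_def by blast

lemma M_zero: "\<not> u s t \<Longrightarrow> M s t = 0"
  using supp[of s t] nonneg[of s t] by auto

lemma A_nonneg: "mpow M n s t \<ge> 0" by (rule mpow_nonneg[OF nonneg])
lemma A_le1: "mpow M n s t \<le> 1" by (rule mpow_le1[OF nonneg rows])
lemma A_rows: "(\<Sum>t\<in>UNIV. mpow M n s t) = 1" by (rule mpow_rows[OF rows])

lemma A_pos: "mpow M (Suc n) s t > 0 \<longleftrightarrow> u s t"
proof (induction n arbitrary: s)
  case 0
  then show ?case using mpow_one[of M s t] supp by simp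
next
  case (Suc n)
  have "mpow M (Suc (Suc n)) s t > 0 \<longleftrightarrow> (\<exists>q. M s q * mpow M (Suc n) q t > 0)"
    by (subst mpow.simps(2)) (rule sum_pos_iff, intro mult_nonneg_nonneg nonneg A_nonneg)
  also have "\<dots> \<longleftrightarrow> (\<exists>q. M s q > 0 \<and> mpow M (Suc n) q t > 0)"
    using nonneg A_nonneg by (auto simp: zero_less_mult_iff less_le)
  also have "\<dots> \<longleftrightarrow> (\<exists>q. u s q \<and> u q t)" using Suc supp by auto
  also have "\<dots> \<longleftrightarrow> u s t"
    using fun_cong[OF fun_cong[OF idem, of s], of t] unfolding lw_concat_def by blast
  finally show ?case .
qed

lemma A_zero: "\<not> u s t \<Longrightarrow> s \<noteq> t \<Longrightarrow> mpow M n s t = 0"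
proof (cases n)
  case (Suc m)
  then show "\<not> u s t \<Longrightarrow> s \<noteq> t \<Longrightarrow> mpow M n s t = 0"
    using A_pos[of m s t] A_nonneg[of n s t] by (auto simp: less_le)
qed auto

lemma exists_succ: "\<exists>z. u s z"
proof (rule ccontr)
  assume "\<not> ?thesis"
  then have "\<And>z. M s z = 0" using M_zero by auto
  then show False using rows[of s] by simp
qed

lemma rec_refl: "lw_recurrent u t \<Longrightarrow> u t t"
  using exists_succ[of t] trans_u unfolding lw_recurrent_def by blast

lemma rec_closed: "lw_recurrent u r \<Longrightarrow> u r q \<Longrightarrow> lw_recurrent u q"
  unfolding lw_recurrent_def using trans_u by blast

definition Rel where "Rel = {(y, x). u x y \<and> \<not> u y x}"

lemma wf_Rel: "wf Rel"
proof (rule finite_acyclic_wf)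
  show "finite Rel" by simp
  have tr: "Relation.trans Rel" unfolding Rel_def Relation.trans_def using trans_u by blast
  show "acyclic Rel" unfolding acyclic_def trancl_id[OF tr] by (auto simp: Rel_def)
qed

lemma exists_rec: "\<exists>r. lw_recurrent u r \<and> u x r"
proof (induction x rule: wf_induct_rule[OF wf_Rel])
  case (1 x)
  show ?case
  proof (cases "lw_recurrent u x")
    case True
    then show ?thesis using rec_refl by blast
  next
    case False
    then obtain y where "u x y" "\<not> u y x" unfolding lw_recurrent_def by blast
    then have "(y, x) \<in> Rel" by (simp add: Rel_def)
    then obtain r where "lw_recurrent u r" "u y r" using 1 by blast
    then show ?thesis using \<open>u x y\<close> trans_u by blast
  qed
qed

end



lemma sandwich_seq:
  fixes g :: "nat \<Rightarrow> real"
  assumes "\<And>n. f n \<le> g n" "\<And>n. g n \<le> h n" "f \<longlonglongrightarrow> c" "h \<longlonglongrightarrow> c"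
  shows "g \<longlonglongrightarrow> c"
  by (rule tendsto_sandwich[of f g sequentially h c]) (use assms in auto)

context idem_chain
begin

definition Tset where "Tset = {q. \<not> lw_recurrent u q}"
definition G where "G m s = (\<Sum>q\<in>Tset. mpow M m s q)"
definition cT where "cT = Max (insert 0 ((\<lambda>p. \<Sum>q\<in>Tset. M p q) ` Tset))"

lemma row_T_lt1: "p \<in> Tset \<Longrightarrow> (\<Sum>q\<in>Tset. M p q) < 1"
proof -
  obtain r where r: "lw_recurrent u r" "u p r" using exists_rec by blast
  have "r \<notin> Tset" using r by (simp add: Tset_def)
  have "1 = (\<Sum>q\<in>UNIV. M p q)" using rows by simp
  also have "\<dots> = (\<Sum>q\<in>UNIV - Tset. M p q) + (\<Sum>q\<in>Tset. M p q)"
    by (rule sum.subset_diff) auto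
  finally have 1: "1 = (\<Sum>q\<in>UNIV - Tset. M p q) + (\<Sum>q\<in>Tset. M p q)" .
  have "M p r \<le> (\<Sum>q\<in>UNIV - Tset. M p q)"
    by (rule member_le_sum) (use \<open>r \<notin> Tset\<close> nonneg in auto)
  moreover have "M p r > 0" using r supp by simp
  ultimately show ?thesis using 1 by linarith
qed

lemma cT_lt1: "cT < 1"
  unfolding cT_def by (subst Max_less_iff) (auto simp: row_T_lt1)

lemma cT_nonneg: "0 \<le> cT"
  unfolding cT_def by (rule Max_ge) auto

lemma row_T_le: "p \<in> Tset \<Longrightarrow> (\<Sum>q\<in>Tset. M p q) \<le> cT"
  unfolding cT_def by (rule Max_ge) auto

lemma row_T_zero: "p \<notin> Tset \<Longrightarrow> (\<Sum>q\<in>Tset. M p q) = 0"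
proof (rule sum.neutral, rule ballI)
  fix q assume "p \<notin> Tset" "q \<in> Tset"
  then have "\<not> u p q" using rec_closed by (auto simp: Tset_def)
  then show "M p q = 0" by (rule M_zero)
qed

lemma G_nonneg: "0 \<le> G m s"
  unfolding G_def by (rule sum_nonneg) (simp add: A_nonneg)

lemma G_le1: "G m s \<le> 1"
proof -
  have "G m s \<le> (\<Sum>q\<in>UNIV. mpow M m s q)"
    unfolding G_def by (rule sum_mono2) (auto simp: A_nonneg)
  then show ?thesis using A_rows by simp
qed

lemma G_step: "G (Suc m) s \<le> cT * G m s"
proof -
  have "G (Suc m) s = (\<Sum>q\<in>Tset. \<Sum>p\<in>UNIV. mpow M m s p * M p q)"
    unfolding G_def by (simp add: mpow_Suc_right)
  also have "\<dots> = (\<Sum>p\<in>UNIV. mpow M m s p * (\<Sum>q\<in>Tset. M p q))"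
    by (subst sum.swap) (simp add: sum_distrib_left)
  also have "\<dots> \<le> (\<Sum>p\<in>UNIV. mpow M m s p * (if p \<in> Tset then cT else 0))"
    by (rule sum_mono, rule mult_left_mono) (auto simp: A_nonneg row_T_le row_T_zero)
  also have "\<dots> = (\<Sum>p\<in>UNIV. if p \<in> Tset then mpow M m s p * cT else 0)"
    by (rule sum.cong) auto
  also have "\<dots> = (\<Sum>p\<in>Tset. mpow M m s p * cT)"
    using sum.inter_restrict[of UNIV "\<lambda>p. mpow M m s p * cT" Tset] by simp
  also have "\<dots> = cT * G m s" unfolding G_def by (simp add: sum_distrib_left mult.commute)
  finally show ?thesis .
qed

lemma G_bound: "G m s \<le> cT ^ m"
proof (induction m)
  case 0
  then show ?case using G_le1 by simp
next
  case (Suc m)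
  have "G (Suc m) s \<le> cT * G m s" by (rule G_step)
  also have "\<dots> \<le> cT * cT ^ m" using Suc cT_nonneg by (simp add: mult_left_mono)
  finally show ?case by simp
qed

lemma G_lim: "(\<lambda>m. G m s) \<longlonglongrightarrow> 0"
  by (rule sandwich_seq[where f="\<lambda>_. 0" and h="\<lambda>m. cT ^ m"])
     (auto simp: G_nonneg G_bound intro: LIMSEQ_realpow_zero cT_nonneg cT_lt1)

lemma lim_nonrec:
  assumes "\<not> lw_recurrent u t"
  shows "(\<lambda>n. mpow M n s t) \<longlonglongrightarrow> 0"
proof (rule sandwich_seq[where f="\<lambda>_. 0" and h="\<lambda>m. G m s"])
  fix n
  show "mpow M n s t \<le> G n s"
    unfolding G_def by (rule member_le_sum) (use assms in \<open>auto simp: Tset_def A_nonneg\<close>)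
qed (auto simp: A_nonneg G_lim)

definition Cl where "Cl t = {r. u t r}"

lemma cl_self: "lw_recurrent u t \<Longrightarrow> t \<in> Cl t"
  using rec_refl by (simp add: Cl_def)
lemma cl_back: "lw_recurrent u t \<Longrightarrow> r \<in> Cl t \<Longrightarrow> u r t"
  by (simp add: Cl_def lw_recurrent_def)
lemma cl_closed: "r \<in> Cl t \<Longrightarrow> u r q \<Longrightarrow> q \<in> Cl t"
  using trans_u by (auto simp: Cl_def)
lemma cl_conn: "lw_recurrent u t \<Longrightarrow> r \<in> Cl t \<Longrightarrow> r' \<in> Cl t \<Longrightarrow> u r r'"
  using cl_back[of t r] trans_u[of r t r'] by (simp add: Cl_def)

lemma cl_restrict:
  assumes "r \<in> Cl t" shows "(\<Sum>q\<in>UNIV. M r q * f q) = (\<Sum>q\<in>Cl t. M r q * f q)"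
proof (rule sum_UNIV_restrict)
  fix q assume "q \<notin> Cl t"
  then have "\<not> u r q" using cl_closed assms by blast
  then show "M r q * f q = 0" using M_zero by simp
qed

lemma cl_rows: "r \<in> Cl t \<Longrightarrow> (\<Sum>q\<in>Cl t. M r q) = 1"
  using cl_restrict[of r t "\<lambda>_. 1"] rows[of r] by simp

lemma cl_step:
  assumes "r \<in> Cl t"
  shows "mpow M (Suc n) r x = (\<Sum>q\<in>Cl t. M r q * mpow M n q x)"
proof -
  have "mpow M (Suc n) r x = (\<Sum>q\<in>UNIV. M r q * mpow M n q x)" by (rule mpow.simps(2))
  also have "\<dots> = (\<Sum>q\<in>Cl t. M r q * mpow M n q x)" by (rule cl_restrict[OF assms])
  finally show ?thesis .
qed

end



lemma div2_lim: "filterlim (\<lambda>n::nat. n div 2) sequentially sequentially"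
  unfolding filterlim_at_top eventually_sequentially
proof (intro allI)
  fix Z :: nat show "\<exists>N. \<forall>n\<ge>N. Z \<le> n div 2" by (rule exI[of _ "2*Z"]) auto
qed

lemma div2c_lim: "filterlim (\<lambda>n::nat. n - n div 2) sequentially sequentially"
  unfolding filterlim_at_top eventually_sequentially
proof (intro allI)
  fix Z :: nat show "\<exists>N. \<forall>n\<ge>N. Z \<le> n - n div 2" by (rule exI[of _ "2*Z"]) auto
qed

context idem_chain
begin

definition mx where "mx t n = Max ((\<lambda>r. mpow M n r t) ` Cl t)"
definition mn where "mn t n = Min ((\<lambda>r. mpow M n r t) ` Cl t)"
definition eC where "eC t = Min ((\<lambda>(r, q). M r q) ` (Cl t \<times> Cl t))"

context
  fixes t assumes rt: "lw_recurrent u t"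
begin

lemma cl_ne: "Cl t \<noteq> {}" using cl_self[OF rt] by blast

lemma mn_le: "r \<in> Cl t \<Longrightarrow> mn t n \<le> mpow M n r t"
  unfolding mn_def by (rule Min_le) auto

lemma le_mx: "r \<in> Cl t \<Longrightarrow> mpow M n r t \<le> mx t n"
  unfolding mx_def by (rule Max_ge) auto

lemma argmin: "\<exists>q\<in>Cl t. mpow M n q t = mn t n"
proof -
  have "mn t n \<in> (\<lambda>r. mpow M n r t) ` Cl t" unfolding mn_def by (rule Min_in) (auto simp: cl_ne)
  then show ?thesis by auto
qed

lemma argmax: "\<exists>q\<in>Cl t. mpow M n q t = mx t n"
proof -
  have "mx t n \<in> (\<lambda>r. mpow M n r t) ` Cl t" unfolding mx_def by (rule Max_in) (auto simp: cl_ne)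
  then show ?thesis by auto
qed

lemma eC_le: "r \<in> Cl t \<Longrightarrow> q \<in> Cl t \<Longrightarrow> eC t \<le> M r q"
  unfolding eC_def by (rule Min_le) force+

lemma eC_pos: "0 < eC t"
proof -
  have "\<forall>a\<in>(\<lambda>(r, q). M r q) ` (Cl t \<times> Cl t). 0 < a"
    using cl_conn[OF rt] supp by auto
  then show ?thesis unfolding eC_def using cl_ne by (subst Min_gr_iff) auto
qed

lemma mm_step:
  "mn t n + eC t * (mx t n - mn t n) \<le> mn t (Suc n) \<and> mx t (Suc n) \<le> mx t n - eC t * (mx t n - mn t n)"
proof -
  obtain q0 where q0: "q0 \<in> Cl t" "mpow M n q0 t = mn t n" using argmin by blast
  obtain q1 where q1: "q1 \<in> Cl t" "mpow M n q1 t = mx t n" using argmax by blast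
  have b: "mn t n + eC t * (mx t n - mn t n) \<le> mpow M (Suc n) r t \<and> mpow M (Suc n) r t \<le> mx t n - eC t * (mx t n - mn t n)"
    if r: "r \<in> Cl t" for r
    unfolding cl_step[OF r]
    by (rule avg_bounds[where ?q0.0=q0 and ?q1.0=q1])
       (use q0 q1 r in \<open>auto simp: nonneg cl_rows mn_le le_mx eC_le\<close>)
  show ?thesis
  proof
    show "mn t n + eC t * (mx t n - mn t n) \<le> mn t (Suc n)"
      unfolding mn_def[of t "Suc n"] by (rule Min.boundedI) (use b cl_ne in auto)
    show "mx t (Suc n) \<le> mx t n - eC t * (mx t n - mn t n)"
      unfolding mx_def[of t "Suc n"] by (rule Max.boundedI) (use b cl_ne in auto)
  qed
qed

lemma D_nonneg: "0 \<le> mx t n - mn t n"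
  using mn_le[OF cl_self[OF rt], of n] le_mx[OF cl_self[OF rt], of n] by simp

lemma mx_le1: "mx t n \<le> 1" using argmax[of n] A_le1 by metis
lemma mn_nonneg: "0 \<le> mn t n" using argmin[of n] A_nonneg by metis

definition c2 where "c2 = max 0 (1 - 2 * eC t)"

lemma D_step: "mx t (Suc n) - mn t (Suc n) \<le> c2 * (mx t n - mn t n)"
proof -
  have "mx t (Suc n) - mn t (Suc n) \<le> (1 - 2 * eC t) * (mx t n - mn t n)"
    using mm_step[of n] by (simp add: algebra_simps)
  also have "\<dots> \<le> c2 * (mx t n - mn t n)"
    unfolding c2_def by (rule mult_right_mono) (use D_nonneg[of n] in auto)
  finally show ?thesis .
qed

lemma D_bound: "mx t n - mn t n \<le> c2 ^ n"
proof (induction n)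
  case 0
  then show ?case using mx_le1[of 0] mn_nonneg[of 0] by simp
next
  case (Suc n)
  have "c2 \<ge> 0" by (simp add: c2_def)
  then show ?case using D_step[of n] Suc mult_left_mono[OF Suc.IH \<open>c2 \<ge> 0\<close>] by simp
qed

lemma D_lim: "(\<lambda>n. mx t n - mn t n) \<longlonglongrightarrow> 0"
proof (rule sandwich_seq[where f="\<lambda>_. 0" and h="\<lambda>n. c2 ^ n"])
  show "(\<lambda>n. c2 ^ n) \<longlonglongrightarrow> 0"
    by (rule LIMSEQ_realpow_zero) (use eC_pos in \<open>auto simp: c2_def\<close>)
qed (use D_nonneg D_bound in auto)

lemma class_conv: "\<exists>p>0. \<forall>r\<in>Cl t. (\<lambda>n. mpow M n r t) \<longlonglongrightarrow> p"
proof -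
  have inc: "incseq (mn t)"
  proof (rule incseq_SucI)
    fix n
    show "mn t n \<le> mn t (Suc n)"
      using mm_step[of n] eC_pos D_nonneg[of n] by (smt (verit) mult_nonneg_nonneg)
  qed
  obtain p where p: "mn t \<longlonglongrightarrow> p" "\<forall>i. mn t i \<le> p"
    using incseq_convergent[OF inc, of 1] mn_le[OF cl_self[OF rt]] A_le1 by (metis order_trans)
  have mxl: "mx t \<longlonglongrightarrow> p"
    using tendsto_add[OF p(1) D_lim] by simp
  have "0 < mn t 1"
  proof -
    obtain q where "q \<in> Cl t" "mpow M 1 q t = mn t 1" using argmin by blast
    moreover have "u q t" using cl_back[OF rt \<open>q \<in> Cl t\<close>] .
    ultimately show ?thesis using A_pos[of 0 q t] by simp
  qed
  then have "p > 0" using p(2) by (metis less_le_trans)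
  moreover have "\<forall>r\<in>Cl t. (\<lambda>n. mpow M n r t) \<longlonglongrightarrow> p"
  proof
    fix r assume "r \<in> Cl t"
    show "(\<lambda>n. mpow M n r t) \<longlonglongrightarrow> p"
      by (rule sandwich_seq[OF mn_le[OF \<open>r \<in> Cl t\<close>] le_mx[OF \<open>r \<in> Cl t\<close>] p(1) mxl])
  qed
  ultimately show ?thesis by blast
qed

end
end



context idem_chain
begin

lemma decomp_bound:
  assumes rt: "lw_recurrent u t"
  shows "\<bar>mpow M (m + k) s t - (\<Sum>q\<in>Cl t. mpow M m s q) * p\<bar>
           \<le> (\<Sum>q\<in>Cl t. \<bar>mpow M k q t - p\<bar>) + G m s"
proof -
  define S1 where "S1 = (\<Sum>q\<in>Cl t. mpow M m s q * mpow M k q t)"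
  define S2 where "S2 = (\<Sum>q\<in>UNIV - Cl t. mpow M m s q * mpow M k q t)"
  have "mpow M (m + k) s t = (\<Sum>q\<in>UNIV. mpow M m s q * mpow M k q t)" by (rule mpow_add)
  also have "\<dots> = S2 + S1" unfolding S1_def S2_def by (rule sum.subset_diff) auto
  finally have eq: "mpow M (m + k) s t = S2 + S1" .
  have "S1 - (\<Sum>q\<in>Cl t. mpow M m s q) * p = (\<Sum>q\<in>Cl t. mpow M m s q * (mpow M k q t - p))"
    unfolding S1_def by (simp add: sum_distrib_right sum_distrib_left sum_subtractf algebra_simps)
  also have "\<bar>\<dots>\<bar> \<le> (\<Sum>q\<in>Cl t. \<bar>mpow M m s q * (mpow M k q t - p)\<bar>)" by (rule sum_abs)
  also have "\<dots> \<le> (\<Sum>q\<in>Cl t. \<bar>mpow M k q t - p\<bar>)"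
  proof (rule sum_mono)
    fix q
    have "\<bar>mpow M m s q * (mpow M k q t - p)\<bar> = mpow M m s q * \<bar>mpow M k q t - p\<bar>"
      by (simp add: abs_mult A_nonneg)
    also have "\<dots> \<le> 1 * \<bar>mpow M k q t - p\<bar>" by (rule mult_right_mono) (auto simp: A_le1)
    finally show "\<bar>mpow M m s q * (mpow M k q t - p)\<bar> \<le> \<bar>mpow M k q t - p\<bar>" by simp
  qed
  finally have b1: "\<bar>S1 - (\<Sum>q\<in>Cl t. mpow M m s q) * p\<bar> \<le> (\<Sum>q\<in>Cl t. \<bar>mpow M k q t - p\<bar>)" .
  have s2n: "0 \<le> S2" unfolding S2_def by (rule sum_nonneg) (simp add: A_nonneg)
  have "S2 \<le> (\<Sum>q\<in>UNIV - Cl t. if q \<in> Tset then mpow M m s q else 0)"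
    unfolding S2_def
  proof (rule sum_mono)
    fix q assume q: "q \<in> UNIV - Cl t"
    show "mpow M m s q * mpow M k q t \<le> (if q \<in> Tset then mpow M m s q else 0)"
    proof (cases "q \<in> Tset")
      case True
      then show ?thesis using mult_left_mono[OF A_le1[of k q t] A_nonneg[of m s q]] by simp
    next
      case False
      then have rq: "lw_recurrent u q" by (simp add: Tset_def)
      have "\<not> u q t"
      proof
        assume "u q t"
        then have "u t q" using rq by (simp add: lw_recurrent_def)
        then show False using q by (simp add: Cl_def)
      qed
      moreover have "q \<noteq> t" using q cl_self[OF rt] by auto
      ultimately have "mpow M k q t = 0" by (rule A_zero)
      then show ?thesis using False by simp
    qed
  qed
  also have "\<dots> \<le> (\<Sum>q\<in>UNIV. if q \<in> Tset then mpow M m s q else 0)"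
    by (rule sum_mono2) (auto simp: A_nonneg)
  also have "\<dots> = G m s"
    unfolding G_def using sum.inter_restrict[of UNIV "\<lambda>q. mpow M m s q" Tset] by simp
  finally have b2: "S2 \<le> G m s" .
  show ?thesis unfolding eq using b1 b2 s2n by linarith
qed

lemma lim_rec:
  assumes rt: "lw_recurrent u t"
  shows "\<exists>l. (\<lambda>n. mpow M n s t) \<longlonglongrightarrow> l \<and> (l > 0 \<longleftrightarrow> u s t)"
proof -
  obtain p where p: "p > 0" "\<And>r. r \<in> Cl t \<Longrightarrow> (\<lambda>n. mpow M n r t) \<longlonglongrightarrow> p"
    using class_conv[OF rt] by blast
  define h where "h m = (\<Sum>q\<in>Cl t. mpow M m s q)" for m
  have inc: "incseq h"
  proof (rule incseq_SucI)
    fix m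
    have "h (Suc m) = (\<Sum>q\<in>Cl t. \<Sum>r\<in>UNIV. mpow M m s r * M r q)"
      unfolding h_def by (simp add: mpow_Suc_right)
    also have "\<dots> = (\<Sum>r\<in>UNIV. mpow M m s r * (\<Sum>q\<in>Cl t. M r q))"
      by (subst sum.swap) (simp add: sum_distrib_left)
    also have "\<dots> \<ge> (\<Sum>r\<in>UNIV. mpow M m s r * (if r \<in> Cl t then 1 else 0))"
      by (rule sum_mono, rule mult_left_mono) (auto simp: A_nonneg cl_rows intro: sum_nonneg nonneg)
    moreover have "(\<Sum>r\<in>UNIV. mpow M m s r * (if r \<in> Cl t then 1 else 0)) = h m"
    proof -
      have "(\<Sum>r\<in>UNIV. mpow M m s r * (if r \<in> Cl t then 1 else 0)) = (\<Sum>r\<in>UNIV. if r \<in> Cl t then mpow M m s r else 0)"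
        by (rule sum.cong) auto
      then show ?thesis unfolding h_def using sum.inter_restrict[of UNIV "\<lambda>r. mpow M m s r" "Cl t"] by simp
    qed
    ultimately show "h m \<le> h (Suc m)" by simp
  qed
  have hle: "h m \<le> 1" for m
  proof -
    have "h m \<le> (\<Sum>q\<in>UNIV. mpow M m s q)" unfolding h_def by (rule sum_mono2) (auto simp: A_nonneg)
    then show ?thesis using A_rows by simp
  qed
  obtain H where H: "h \<longlonglongrightarrow> H" "\<forall>i. h i \<le> H" using incseq_convergent[OF inc, of 1] hle by blast
  define R where "R n = (\<Sum>q\<in>Cl t. \<bar>mpow M (n - n div 2) q t - p\<bar>) + G (n div 2) s" for n
  have Rlim: "R \<longlonglongrightarrow> 0"
  proof -
    have "(\<lambda>n. \<Sum>q\<in>Cl t. \<bar>mpow M (n - n div 2) q t - p\<bar>) \<longlonglongrightarrow> (\<Sum>q\<in>Cl t. \<bar>p - p\<bar>)"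
    proof (rule tendsto_sum, rule tendsto_rabs, rule tendsto_diff)
      fix q assume "q \<in> Cl t"
      show "(\<lambda>n. mpow M (n - n div 2) q t) \<longlonglongrightarrow> p"
        by (rule filterlim_compose[OF p(2)[OF \<open>q \<in> Cl t\<close>] div2c_lim])
    qed auto
    moreover have "(\<lambda>n. G (n div 2) s) \<longlonglongrightarrow> 0"
      by (rule filterlim_compose[OF G_lim div2_lim])
    ultimately show ?thesis unfolding R_def using tendsto_add by fastforce
  qed
  have hlim: "(\<lambda>n. h (n div 2) * p) \<longlonglongrightarrow> H * p"
    by (rule tendsto_mult[OF filterlim_compose[OF H(1) div2_lim] tendsto_const])
  have bnd: "\<bar>mpow M n s t - h (n div 2) * p\<bar> \<le> R n" for n
  proof -
    have "n = n div 2 + (n - n div 2)" by simp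
    then have "mpow M n s t = mpow M (n div 2 + (n - n div 2)) s t" by simp
    then show ?thesis unfolding R_def h_def using decomp_bound[OF rt, of "n div 2" "n - n div 2" s p] by simp
  qed
  have elim: "(\<lambda>n. mpow M n s t - h (n div 2) * p) \<longlonglongrightarrow> 0"
  proof (rule sandwich_seq[where f="\<lambda>n. - R n" and h=R])
    show "(\<lambda>n. - R n) \<longlonglongrightarrow> 0" using tendsto_minus[OF Rlim] by simp
  qed (use bnd Rlim in \<open>auto simp: abs_le_iff, smt (verit) bnd abs_le_iff\<close>)
  have lim: "(\<lambda>n. mpow M n s t) \<longlonglongrightarrow> H * p"
    using tendsto_add[OF elim hlim] by simp
  have "H * p > 0 \<longleftrightarrow> u s t"
  proof
    assume "u s t"
    have "0 < mpow M 1 s t" using A_pos[of 0 s t] \<open>u s t\<close> by simp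
    also have "\<dots> \<le> h 1" unfolding h_def by (rule member_le_sum) (auto simp: A_nonneg cl_self[OF rt])
    also have "\<dots> \<le> H" using H(2) by simp
    finally show "H * p > 0" using p(1) by simp
  next
    assume pos: "H * p > 0"
    show "u s t"
    proof (rule ccontr)
      assume nu: "\<not> u s t"
      then have "s \<noteq> t" using rec_refl[OF rt] by auto
      then have "\<And>n. mpow M n s t = 0" using A_zero nu by blast
      then have "(\<lambda>n. mpow M n s t) \<longlonglongrightarrow> 0" by simp
      then have "H * p = 0" using LIMSEQ_unique lim by blast
      then show False using pos by auto
    qed
  qed
  then show ?thesis using lim by blast
qed

lemma lim_all: "\<exists>l. (\<lambda>n. mpow M n s t) \<longlonglongrightarrow> l \<and> (l > 0 \<longleftrightarrow> lw_sharp u s t)"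
proof (cases "lw_recurrent u t")
  case True
  then show ?thesis using lim_rec[OF True, of s] by (auto simp: lw_sharp_def)
next
  case False
  then show ?thesis using lim_nonrec[OF False, of s] by (auto simp: lw_sharp_def)
qed

end



lemma reifies_lim:
  assumes "reifies A w lw"
  shows "(\<lambda>n. path_prob A s (w n) t) \<longlonglongrightarrow> lim (\<lambda>n. path_prob A s (w n) t)"
  using assms unfolding reifies_def by (simp add: convergent_LIMSEQ_iff)

lemma lim_nonneg_pp:
  assumes "reifies A w lw"
  shows "0 \<le> lim (\<lambda>n. path_prob A s (w n) t)"
  by (rule LIMSEQ_le_const[OF reifies_lim[OF assms]]) (auto simp: path_prob_nonneg)

lemma part1:
  fixes A :: "('s::finite, 'a) prob_automaton"
  assumes "reifies A us u" and "reifies A vs v"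
  shows "reifies A (\<lambda>n. us n @ vs n) (lw_concat u v)"
  unfolding reifies_def
proof (intro allI conjI)
  fix s t
  define a where "a q = lim (\<lambda>n. path_prob A s (us n) q)" for q
  define b where "b q = lim (\<lambda>n. path_prob A q (vs n) t)" for q
  have L: "(\<lambda>n. path_prob A s (us n @ vs n) t) \<longlonglongrightarrow> (\<Sum>q\<in>UNIV. a q * b q)"
    unfolding path_prob_append a_def b_def
    by (intro tendsto_sum tendsto_mult reifies_lim[OF assms(1)] reifies_lim[OF assms(2)])
  then show "convergent (\<lambda>n. path_prob A s (us n @ vs n) t)" by (auto simp: convergent_def)
  have limeq: "lim (\<lambda>n. path_prob A s (us n @ vs n) t) = (\<Sum>q\<in>UNIV. a q * b q)"
    using L by (rule limI)
  have an: "0 \<le> a q" for q unfolding a_def by (rule lim_nonneg_pp[OF assms(1)])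
  have bn: "0 \<le> b q" for q unfolding b_def by (rule lim_nonneg_pp[OF assms(2)])
  have "(\<Sum>q\<in>UNIV. a q * b q) > 0 \<longleftrightarrow> (\<exists>q. a q * b q > 0)"
    by (rule sum_pos_iff) (simp add: an bn)
  also have "\<dots> \<longleftrightarrow> (\<exists>q. a q > 0 \<and> b q > 0)"
    using an bn by (auto simp: zero_less_mult_iff less_le)
  also have "\<dots> \<longleftrightarrow> lw_concat u v s t"
    using assms unfolding reifies_def lw_concat_def a_def b_def by auto
  finally show "lw_concat u v s t \<longleftrightarrow> 0 < lim (\<lambda>n. path_prob A s (us n @ vs n) t)"
    using limeq by simp
qed

lemma part2:
  fixes A :: "('s::finite, 'a) prob_automaton"
  assumes reif: "reifies A us u" and idem: "lw_idempotent u"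
  shows "\<exists>f. strict_mono f \<and>
               (\<forall>g. strict_mono g \<and> (\<forall>n. f n \<le> g n) \<longrightarrow>
                    reifies A (\<lambda>n. word_pow (us (g n)) n) (lw_sharp u))"
proof -
  define M where "M s t = lim (\<lambda>n. path_prob A s (us n) t)" for s t
  have Mlim: "(\<lambda>n. path_prob A s (us n) t) \<longlonglongrightarrow> M s t" for s t
    unfolding M_def by (rule reifies_lim[OF reif])
  have Mnn: "0 \<le> M s t" for s t unfolding M_def by (rule lim_nonneg_pp[OF reif])
  have Mrows: "(\<Sum>t\<in>UNIV. M s t) = 1" for s
  proof -
    have "(\<lambda>n. \<Sum>t\<in>UNIV. path_prob A s (us n) t) \<longlonglongrightarrow> (\<Sum>t\<in>UNIV. M s t)"
      by (intro tendsto_sum Mlim)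
    then have "(\<lambda>n. 1::real) \<longlonglongrightarrow> (\<Sum>t\<in>UNIV. M s t)" by (simp add: path_prob_rows)
    then show ?thesis using LIMSEQ_unique tendsto_const by metis
  qed
  have Msupp: "M s t > 0 \<longleftrightarrow> u s t" for s t
    using reif unfolding reifies_def M_def by auto
  interpret ic: idem_chain M u
    by unfold_locales (use Mnn Mrows Msupp idem in \<open>auto simp: lw_idempotent_def\<close>)
  define P where "P k s t = path_prob A s (us k) t" for k s t
  have Pnn: "0 \<le> P k s t" for k s t by (simp add: P_def path_prob_nonneg)
  have Prows: "(\<Sum>t\<in>UNIV. P k s t) = 1" for k s by (simp add: P_def path_prob_rows)
  define ep where "ep n = 1 / (real (Suc n))^2" for n
  have epos: "ep n > 0" for n by (simp add: ep_def)
  have exK: "\<exists>K. \<forall>k\<ge>K. \<forall>s. (\<Sum>t\<in>UNIV. \<bar>P k s t - M s t\<bar>) \<le> ep n" for n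
  proof -
    define c where "c = real CARD('s)"
    have cpos: "c > 0" by (simp add: c_def)
    have "eventually (\<lambda>k. \<forall>st. \<bar>P k (fst st) (snd st) - M (fst st) (snd st)\<bar> < ep n / c) sequentially"
    proof (rule eventually_all_finite)
      fix st :: "'s \<times> 's"
      have "(\<lambda>k. P k (fst st) (snd st)) \<longlonglongrightarrow> M (fst st) (snd st)" unfolding P_def by (rule Mlim)
      then show "eventually (\<lambda>k. \<bar>P k (fst st) (snd st) - M (fst st) (snd st)\<bar> < ep n / c) sequentially"
        using epos[of n] cpos unfolding tendsto_iff dist_real_def by auto
    qed
    then obtain K where K: "\<And>k st. k \<ge> K \<Longrightarrow> \<bar>P k (fst st) (snd st) - M (fst st) (snd st)\<bar> < ep n / c"
      unfolding eventually_sequentially by blast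
    have "(\<Sum>t\<in>UNIV. \<bar>P k s t - M s t\<bar>) \<le> ep n" if "k \<ge> K" for k s
    proof -
      have "(\<Sum>t\<in>UNIV. \<bar>P k s t - M s t\<bar>) \<le> (\<Sum>t\<in>(UNIV::'s set). ep n / c)"
        by (rule sum_mono) (use K[OF that, of "(s, _)"] in \<open>auto simp: less_imp_le\<close>)
      also have "\<dots> = ep n" using cpos by (simp add: c_def)
      finally show ?thesis .
    qed
    then show ?thesis by blast
  qed
  define K where "K n = (SOME K. \<forall>k\<ge>K. \<forall>s. (\<Sum>t\<in>UNIV. \<bar>P k s t - M s t\<bar>) \<le> ep n)" for n
  have Kp: "\<And>k s. k \<ge> K n \<Longrightarrow> (\<Sum>t\<in>UNIV. \<bar>P k s t - M s t\<bar>) \<le> ep n" for n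
    using someI_ex[OF exK[of n]] unfolding K_def by blast
  define f where "f n = n + (\<Sum>i\<le>n. K i)" for n
  have fmono: "strict_mono f"
    unfolding strict_mono_Suc_iff f_def by simp
  have fK: "K n \<le> f n" for n
  proof -
    have "K n \<le> (\<Sum>i\<le>n. K i)" by (rule member_le_sum) auto
    then show ?thesis by (simp add: f_def)
  qed
  have main: "reifies A (\<lambda>n. word_pow (us (g n)) n) (lw_sharp u)" if g: "\<forall>n. f n \<le> g n" for g
    unfolding reifies_def
  proof (intro allI)
    fix s t
    obtain l where l: "(\<lambda>n. mpow M n s t) \<longlonglongrightarrow> l" "l > 0 \<longleftrightarrow> lw_sharp u s t"
      using ic.lim_all by blast
    have eq: "path_prob A s (word_pow (us (g n)) n) t = mpow (P (g n)) n s t" for n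
      using path_prob_word_pow[of A s "us (g n)" n t] by (simp add: P_def[abs_def])
    have close: "\<bar>mpow (P (g n)) n s t - mpow M n s t\<bar> \<le> inverse (real (Suc n))" for n
    proof -
      have "\<bar>mpow (P (g n)) n s t - mpow M n s t\<bar> \<le> (\<Sum>t\<in>UNIV. \<bar>mpow (P (g n)) n s t - mpow M n s t\<bar>)"
        by (rule member_le_sum) auto
      also have "\<dots> \<le> real n * ep n"
      proof (rule mpow_diff)
        fix s'
        show "(\<Sum>t\<in>UNIV. \<bar>P (g n) s' t - M s' t\<bar>) \<le> ep n"
          by (rule Kp) (use fK[of n] g in \<open>auto intro: order_trans\<close>)
      qed (auto simp: Pnn Mnn Mrows Prows)
      also have "\<dots> \<le> inverse (real (Suc n))"
      proof -
        have "real n / (real (Suc n))^2 \<le> real (Suc n) / (real (Suc n))^2"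
          by (rule divide_right_mono) auto
        also have "\<dots> = inverse (real (Suc n))" by (simp add: power2_eq_square divide_inverse del: of_nat_Suc)
        finally show ?thesis unfolding ep_def by simp
      qed
      finally show ?thesis .
    qed
    have lim: "(\<lambda>n. path_prob A s (word_pow (us (g n)) n) t) \<longlonglongrightarrow> l"
      unfolding eq
    proof (rule sandwich_seq[where f="\<lambda>n. mpow M n s t - inverse (real (Suc n))"
                                and h="\<lambda>n. mpow M n s t + inverse (real (Suc n))"])
      show "(\<lambda>n. mpow M n s t - inverse (real (Suc n))) \<longlonglongrightarrow> l"
        using tendsto_diff[OF l(1) LIMSEQ_inverse_real_of_nat] by simp
      show "(\<lambda>n. mpow M n s t + inverse (real (Suc n))) \<longlonglongrightarrow> l"
        using tendsto_add[OF l(1) LIMSEQ_inverse_real_of_nat] by simp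
    qed (use close in \<open>auto simp: abs_le_iff, smt (verit) close abs_le_iff, smt (verit) close abs_le_iff\<close>)
    show "convergent (\<lambda>n. path_prob A s (word_pow (us (g n)) n) t) \<and>
          (lw_sharp u s t \<longleftrightarrow> 0 < lim (\<lambda>n. path_prob A s (word_pow (us (g n)) n) t))"
      using lim l(2) limI[OF lim] by (auto simp: convergent_def)
  qed
  show ?thesis using fmono main by blast
qed


theorem proposition2p11:
  fixes A :: "('s::finite, 'a::finite) prob_automaton"
    and us vs :: "nat \<Rightarrow> 'a list"
    and u v :: "'s limit_word"
  assumes "is_limit_word u" and "is_limit_word v"
    and "reifies A us u" and "reifies A vs v"
  shows "reifies A (\<lambda>n. us n @ vs n) (lw_concat u v) \<and>
         (lw_idempotent u \<longrightarrow>
           (\<exists>f. strict_mono f \<and>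
               (\<forall>g. strict_mono g \<and> (\<forall>n. f n \<le> g n) \<longrightarrow>
                    reifies A (\<lambda>n. word_pow (us (g n)) n) (lw_sharp u))))"
proof
  show "reifies A (\<lambda>n. us n @ vs n) (lw_concat u v)" using part1 assms(3,4) by blast
  show "lw_idempotent u \<longrightarrow>
           (\<exists>f. strict_mono f \<and>
               (\<forall>g. strict_mono g \<and> (\<forall>n. f n \<le> g n) \<longrightarrow>
                    reifies A (\<lambda>n. word_pow (us (g n)) n) (lw_sharp u)))"
  proof
    assume "lw_idempotent u"
    from part2[OF assms(3) this] obtain f where f: "strict_mono f"
      "\<forall>g. strict_mono g \<and> (\<forall>n. f n \<le> g n) \<longrightarrow> reifies A (\<lambda>n. word_pow (us (g n)) n) (lw_sharp u)"
      by blast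
    then show "\<exists>f. strict_mono f \<and>
               (\<forall>g. strict_mono g \<and> (\<forall>n. f n \<le> g n) \<longrightarrow>
                    reifies A (\<lambda>n. word_pow (us (g n)) n) (lw_sharp u))" by blast
  qed
qed

end
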